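(* Let $A,B,P,Q,X,Y$ be positive words (in the letters $\sigma_1,\dots,\sigma_{n-1},x_1,\dots,x_{n-1}$, the words $A,B$ possibly empty) with $A\doteq P$, $B\doteq Q$ and $AXB\doteq PYQ$. Then $X\doteq Y$. That is, the monoid $SB_n^+$ is left and right cancellative.
   Context: Fix $n\ge 2$. The positive singular braid monoid $SB_n^+$ is the monoid with generators $\sigma_1,\dots,\sigma_{n-1},x_1,\dots,x_{n-1}$ and relations: $\sigma_i\sigma_j=\sigma_j\sigma_i$ and $x_ix_j=x_jx_i$ if $|i-j|>1$; $x_i\sigma_j=\sigma_jx_i$ if $|i-j|\ne 1$; $\sigma_i\sigma_{i+1}\sigma_i=\sigma_{i+1}\sigma_i\sigma_{i+1}$; $\sigma_i\sigma_{i+1}x_i=x_{i+1}\sigma_i\sigma_{i+1}$; $\sigma_{i+1}\sigma_ix_{i+1}=x_i\sigma_{i+1}\sigma_i$. A positive word is a word in the letters $\sigma_i,x_i$. For positive words, $A\doteq B$ means they represent the same element of $SB_n^+$. *)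

theory Defs
  imports Main
begin

datatype letter = Sig nat | Xl nat

fun idx :: "letter \<Rightarrow> nat" where
  "idx (Sig i) = i" | "idx (Xl i) = i"

definition pos_word :: "nat \<Rightarrow> letter list \<Rightarrow> bool" where
  "pos_word n w \<longleftrightarrow> (\<forall>a\<in>set w. 1 \<le> idx a \<and> idx a \<le> n - 1)"

inductive sb_rel :: "nat \<Rightarrow> letter list \<Rightarrow> letter list \<Rightarrow> bool" for n where
  comm_ss: "\<lbrakk>1 \<le> i; i \<le> n - 1; 1 \<le> j; j \<le> n - 1; i + 1 < j \<or> j + 1 < i\<rbrakk>
     \<Longrightarrow> sb_rel n [Sig i, Sig j] [Sig j, Sig i]"
| comm_xx: "\<lbrakk>1 \<le> i; i \<le> n - 1; 1 \<le> j; j \<le> n - 1; i + 1 < j \<or> j + 1 < i\<rbrakk>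
     \<Longrightarrow> sb_rel n [Xl i, Xl j] [Xl j, Xl i]"
| comm_xs: "\<lbrakk>1 \<le> i; i \<le> n - 1; 1 \<le> j; j \<le> n - 1; i \<noteq> j + 1; j \<noteq> i + 1\<rbrakk>
     \<Longrightarrow> sb_rel n [Xl i, Sig j] [Sig j, Xl i]"
| braid: "\<lbrakk>1 \<le> i; i + 1 \<le> n - 1\<rbrakk>
     \<Longrightarrow> sb_rel n [Sig i, Sig (i+1), Sig i] [Sig (i+1), Sig i, Sig (i+1)]"
| mixed1: "\<lbrakk>1 \<le> i; i + 1 \<le> n - 1\<rbrakk>
     \<Longrightarrow> sb_rel n [Sig i, Sig (i+1), Xl i] [Xl (i+1), Sig i, Sig (i+1)]"
| mixed2: "\<lbrakk>1 \<le> i; i + 1 \<le> n - 1\<rbrakk>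
     \<Longrightarrow> sb_rel n [Sig (i+1), Sig i, Xl (i+1)] [Xl i, Sig (i+1), Sig i]"

inductive sb_eq :: "nat \<Rightarrow> letter list \<Rightarrow> letter list \<Rightarrow> bool" for n where
  refl: "sb_eq n w w"
| sym: "sb_eq n u v \<Longrightarrow> sb_eq n v u"
| trans: "sb_eq n u v \<Longrightarrow> sb_eq n v w \<Longrightarrow> sb_eq n u w"
| rel: "sb_rel n u v \<Longrightarrow> sb_eq n (a @ u @ b) (a @ v @ b)"

end

theory Submission
  imports Defs
begin


definition inr :: "nat \<Rightarrow> nat \<Rightarrow> bool" where "inr n i \<longleftrightarrow> 1 \<le> i \<and> i \<le> n - 1"

fun cpl :: "nat \<Rightarrow> letter \<Rightarrow> letter \<Rightarrow> (letter list \<times> letter list) option" where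
"cpl n (Sig i) (Sig j) = (if inr n i \<and> inr n j then
   (if i+1<j \<or> j+1<i then Some([Sig j],[Sig i]) else if j = i+1 \<or> i = j+1 then Some([Sig j, Sig i],[Sig i, Sig j]) else None) else None)"
| "cpl n (Xl i) (Xl j) = (if inr n i \<and> inr n j \<and> (i+1<j \<or> j+1<i) then Some([Xl j],[Xl i]) else None)"
| "cpl n (Sig i) (Xl j) = (if inr n i \<and> inr n j then
   (if j \<noteq> i+1 \<and> i \<noteq> j+1 then Some([Xl j],[Sig i]) else if j = i+1 then Some([Sig (i+1), Xl i],[Sig i, Sig (i+1)])
    else Some([Sig j, Xl i],[Sig i, Sig j])) else None)"
| "cpl n (Xl j) (Sig i) = (if inr n i \<and> inr n j then
   (if j \<noteq> i+1 \<and> i \<noteq> j+1 then Some([Sig i],[Xl j]) else if j = i+1 then Some([Sig i, Sig (i+1)],[Sig (i+1), Xl i])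
    else Some([Sig i, Sig j],[Sig j, Xl i])) else None)"

datatype rres = Res "letter list" "letter list" | Fail | OOF

fun rv :: "nat \<Rightarrow> nat \<Rightarrow> letter list \<Rightarrow> letter list \<Rightarrow> rres" where
"rv n 0 u v = OOF"
| "rv n (Suc f) [] v = Res v []"
| "rv n (Suc f) (a#u) [] = Res [] (a#u)"
| "rv n (Suc f) (a#u) (b#v) = (if a = b then rv n f u v else
    (case cpl n a b of None \<Rightarrow> Fail | Some (x,y) \<Rightarrow>
      (case rv n f u x of Res p q \<Rightarrow>
         (case rv n f v (y@q) of Res r s \<Rightarrow> Res (p@s) r | Fail \<Rightarrow> Fail | OOF \<Rightarrow> OOF)
       | Fail \<Rightarrow> Fail | OOF \<Rightarrow> OOF)))"

definition fuel :: nat where "fuel = Suc (Suc (Suc (Suc (Suc (Suc (Suc (Suc (Suc (Suc 0)))))))))"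

definition chk :: "nat \<Rightarrow> letter \<Rightarrow> letter \<Rightarrow> letter \<Rightarrow> bool" where
"chk n a b c \<longleftrightarrow> (a\<noteq>b \<longrightarrow> a\<noteq>c \<longrightarrow> b\<noteq>c \<longrightarrow>
  (case cpl n a c of None \<Rightarrow> True | Some(u1,v1) \<Rightarrow>
   (case cpl n c b of None \<Rightarrow> True | Some(u2,v2) \<Rightarrow>
     (case rv n fuel v1 u2 of Fail \<Rightarrow> True | OOF \<Rightarrow> False | Res p q \<Rightarrow>
       (case cpl n a b of None \<Rightarrow> False | Some(u,v) \<Rightarrow>
          (case rv n fuel u (u1@p) of Res w e \<Rightarrow> e = [] \<and> rv n fuel (v@w) (v2@q) = Res [] []
             | _ \<Rightarrow> False))))))"



definition Qc :: "nat \<Rightarrow> nat \<Rightarrow> nat \<Rightarrow> nat \<Rightarrow> bool" where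
"Qc n x y z \<longleftrightarrow> (inr n x \<longrightarrow> inr n y \<longrightarrow> inr n z \<longrightarrow> (chk n (Sig x) (Sig y) (Sig z) \<and> chk n (Sig x) (Sig y) (Xl z) \<and> chk n (Sig x) (Xl y) (Sig z) \<and> chk n (Sig x) (Xl y) (Xl z) \<and> chk n (Xl x) (Sig y) (Sig z) \<and> chk n (Xl x) (Sig y) (Xl z) \<and> chk n (Xl x) (Xl y) (Sig z) \<and> chk n (Xl x) (Xl y) (Xl z)))"

lemma gap_cases:
  fixes g :: nat
  obtains "g = 0" | "g = 1" | d where "g = 2 + d"
proof (cases "g < 2")
  case True then have "g = 0 \<or> g = 1" by auto
  then show ?thesis using that by blast
next
  case False then have "g = 2 + (g - 2)" by simp
  then show ?thesis using that by blast
qed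

lemma q_0_zz: "g1 = 0 \<Longrightarrow> g2 = 0 \<Longrightarrow> Qc n m (m+g1) (m+g1+g2)"
  unfolding Qc_def by (simp add: chk_def fuel_def inr_def)

lemma q_0_zo: "g1 = 0 \<Longrightarrow> g2 = 1 \<Longrightarrow> Qc n m (m+g1) (m+g1+g2)"
  unfolding Qc_def by (simp add: chk_def fuel_def inr_def)

lemma q_0_ze: "g1 = 0 \<Longrightarrow> g2 = 2 + e \<Longrightarrow> Qc n m (m+g1) (m+g1+g2)"
  unfolding Qc_def by (simp add: chk_def fuel_def inr_def)

lemma q_0_oz: "g1 = 1 \<Longrightarrow> g2 = 0 \<Longrightarrow> Qc n m (m+g1) (m+g1+g2)"
  unfolding Qc_def by (simp add: chk_def fuel_def inr_def)

lemma q_0_oo: "g1 = 1 \<Longrightarrow> g2 = 1 \<Longrightarrow> Qc n m (m+g1) (m+g1+g2)"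
  unfolding Qc_def by (simp add: chk_def fuel_def inr_def)

lemma q_0_oe: "g1 = 1 \<Longrightarrow> g2 = 2 + e \<Longrightarrow> Qc n m (m+g1) (m+g1+g2)"
  unfolding Qc_def by (simp add: chk_def fuel_def inr_def)

lemma q_0_dz: "g1 = 2 + d \<Longrightarrow> g2 = 0 \<Longrightarrow> Qc n m (m+g1) (m+g1+g2)"
  unfolding Qc_def by (simp add: chk_def fuel_def inr_def)

lemma q_0_do: "g1 = 2 + d \<Longrightarrow> g2 = 1 \<Longrightarrow> Qc n m (m+g1) (m+g1+g2)"
  unfolding Qc_def by (simp add: chk_def fuel_def inr_def)

lemma q_0_de: "g1 = 2 + d \<Longrightarrow> g2 = 2 + e \<Longrightarrow> Qc n m (m+g1) (m+g1+g2)"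
  unfolding Qc_def by (simp add: chk_def fuel_def inr_def)

lemma qp_0: "Qc n m (m+g1) (m+g1+g2)"
proof (cases g1 rule: gap_cases)
  case 1
  show ?thesis
  proof (cases g2 rule: gap_cases)
    case 1 show ?thesis by (rule q_0_zz[OF \<open>g1 = 0\<close> \<open>g2 = 0\<close>])
  next
    case 2 show ?thesis by (rule q_0_zo[OF \<open>g1 = 0\<close> \<open>g2 = 1\<close>])
  next
    case (3 e) show ?thesis by (rule q_0_ze[OF \<open>g1 = 0\<close> \<open>g2 = 2 + e\<close>])
  qed
next
  case 2
  show ?thesis
  proof (cases g2 rule: gap_cases)
    case 1 show ?thesis by (rule q_0_oz[OF \<open>g1 = 1\<close> \<open>g2 = 0\<close>])
  next
    case 2 show ?thesis by (rule q_0_oo[OF \<open>g1 = 1\<close> \<open>g2 = 1\<close>])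
  next
    case (3 e) show ?thesis by (rule q_0_oe[OF \<open>g1 = 1\<close> \<open>g2 = 2 + e\<close>])
  qed
next
  case (3 d)
  show ?thesis
  proof (cases g2 rule: gap_cases)
    case 1 show ?thesis by (rule q_0_dz[OF \<open>g1 = 2 + d\<close> \<open>g2 = 0\<close>])
  next
    case 2 show ?thesis by (rule q_0_do[OF \<open>g1 = 2 + d\<close> \<open>g2 = 1\<close>])
  next
    case (3 e) show ?thesis by (rule q_0_de[OF \<open>g1 = 2 + d\<close> \<open>g2 = 2 + e\<close>])
  qed
qed

lemma q_1_zz: "g1 = 0 \<Longrightarrow> g2 = 0 \<Longrightarrow> Qc n m (m+g1+g2) (m+g1)"
  unfolding Qc_def by (simp add: chk_def fuel_def inr_def)

lemma q_1_zo: "g1 = 0 \<Longrightarrow> g2 = 1 \<Longrightarrow> Qc n m (m+g1+g2) (m+g1)"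
  unfolding Qc_def by (simp add: chk_def fuel_def inr_def)

lemma q_1_ze: "g1 = 0 \<Longrightarrow> g2 = 2 + e \<Longrightarrow> Qc n m (m+g1+g2) (m+g1)"
  unfolding Qc_def by (simp add: chk_def fuel_def inr_def)

lemma q_1_oz: "g1 = 1 \<Longrightarrow> g2 = 0 \<Longrightarrow> Qc n m (m+g1+g2) (m+g1)"
  unfolding Qc_def by (simp add: chk_def fuel_def inr_def)

lemma q_1_oo: "g1 = 1 \<Longrightarrow> g2 = 1 \<Longrightarrow> Qc n m (m+g1+g2) (m+g1)"
  unfolding Qc_def by (simp add: chk_def fuel_def inr_def)

lemma q_1_oe: "g1 = 1 \<Longrightarrow> g2 = 2 + e \<Longrightarrow> Qc n m (m+g1+g2) (m+g1)"
  unfolding Qc_def by (simp add: chk_def fuel_def inr_def)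

lemma q_1_dz: "g1 = 2 + d \<Longrightarrow> g2 = 0 \<Longrightarrow> Qc n m (m+g1+g2) (m+g1)"
  unfolding Qc_def by (simp add: chk_def fuel_def inr_def)

lemma q_1_do: "g1 = 2 + d \<Longrightarrow> g2 = 1 \<Longrightarrow> Qc n m (m+g1+g2) (m+g1)"
  unfolding Qc_def by (simp add: chk_def fuel_def inr_def)

lemma q_1_de: "g1 = 2 + d \<Longrightarrow> g2 = 2 + e \<Longrightarrow> Qc n m (m+g1+g2) (m+g1)"
  unfolding Qc_def by (simp add: chk_def fuel_def inr_def)

lemma qp_1: "Qc n m (m+g1+g2) (m+g1)"
proof (cases g1 rule: gap_cases)
  case 1
  show ?thesis
  proof (cases g2 rule: gap_cases)
    case 1 show ?thesis by (rule q_1_zz[OF \<open>g1 = 0\<close> \<open>g2 = 0\<close>])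
  next
    case 2 show ?thesis by (rule q_1_zo[OF \<open>g1 = 0\<close> \<open>g2 = 1\<close>])
  next
    case (3 e) show ?thesis by (rule q_1_ze[OF \<open>g1 = 0\<close> \<open>g2 = 2 + e\<close>])
  qed
next
  case 2
  show ?thesis
  proof (cases g2 rule: gap_cases)
    case 1 show ?thesis by (rule q_1_oz[OF \<open>g1 = 1\<close> \<open>g2 = 0\<close>])
  next
    case 2 show ?thesis by (rule q_1_oo[OF \<open>g1 = 1\<close> \<open>g2 = 1\<close>])
  next
    case (3 e) show ?thesis by (rule q_1_oe[OF \<open>g1 = 1\<close> \<open>g2 = 2 + e\<close>])
  qed
next
  case (3 d)
  show ?thesis
  proof (cases g2 rule: gap_cases)
    case 1 show ?thesis by (rule q_1_dz[OF \<open>g1 = 2 + d\<close> \<open>g2 = 0\<close>])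
  next
    case 2 show ?thesis by (rule q_1_do[OF \<open>g1 = 2 + d\<close> \<open>g2 = 1\<close>])
  next
    case (3 e) show ?thesis by (rule q_1_de[OF \<open>g1 = 2 + d\<close> \<open>g2 = 2 + e\<close>])
  qed
qed

lemma q_2_zz: "g1 = 0 \<Longrightarrow> g2 = 0 \<Longrightarrow> Qc n (m+g1) m (m+g1+g2)"
  unfolding Qc_def by (simp add: chk_def fuel_def inr_def)

lemma q_2_zo: "g1 = 0 \<Longrightarrow> g2 = 1 \<Longrightarrow> Qc n (m+g1) m (m+g1+g2)"
  unfolding Qc_def by (simp add: chk_def fuel_def inr_def)

lemma q_2_ze: "g1 = 0 \<Longrightarrow> g2 = 2 + e \<Longrightarrow> Qc n (m+g1) m (m+g1+g2)"
  unfolding Qc_def by (simp add: chk_def fuel_def inr_def)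

lemma q_2_oz: "g1 = 1 \<Longrightarrow> g2 = 0 \<Longrightarrow> Qc n (m+g1) m (m+g1+g2)"
  unfolding Qc_def by (simp add: chk_def fuel_def inr_def)

lemma q_2_oo: "g1 = 1 \<Longrightarrow> g2 = 1 \<Longrightarrow> Qc n (m+g1) m (m+g1+g2)"
  unfolding Qc_def by (simp add: chk_def fuel_def inr_def)

lemma q_2_oe: "g1 = 1 \<Longrightarrow> g2 = 2 + e \<Longrightarrow> Qc n (m+g1) m (m+g1+g2)"
  unfolding Qc_def by (simp add: chk_def fuel_def inr_def)

lemma q_2_dz: "g1 = 2 + d \<Longrightarrow> g2 = 0 \<Longrightarrow> Qc n (m+g1) m (m+g1+g2)"
  unfolding Qc_def by (simp add: chk_def fuel_def inr_def)

lemma q_2_do: "g1 = 2 + d \<Longrightarrow> g2 = 1 \<Longrightarrow> Qc n (m+g1) m (m+g1+g2)"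
  unfolding Qc_def by (simp add: chk_def fuel_def inr_def)

lemma q_2_de: "g1 = 2 + d \<Longrightarrow> g2 = 2 + e \<Longrightarrow> Qc n (m+g1) m (m+g1+g2)"
  unfolding Qc_def by (simp add: chk_def fuel_def inr_def)

lemma qp_2: "Qc n (m+g1) m (m+g1+g2)"
proof (cases g1 rule: gap_cases)
  case 1
  show ?thesis
  proof (cases g2 rule: gap_cases)
    case 1 show ?thesis by (rule q_2_zz[OF \<open>g1 = 0\<close> \<open>g2 = 0\<close>])
  next
    case 2 show ?thesis by (rule q_2_zo[OF \<open>g1 = 0\<close> \<open>g2 = 1\<close>])
  next
    case (3 e) show ?thesis by (rule q_2_ze[OF \<open>g1 = 0\<close> \<open>g2 = 2 + e\<close>])
  qed
next
  case 2
  show ?thesis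
  proof (cases g2 rule: gap_cases)
    case 1 show ?thesis by (rule q_2_oz[OF \<open>g1 = 1\<close> \<open>g2 = 0\<close>])
  next
    case 2 show ?thesis by (rule q_2_oo[OF \<open>g1 = 1\<close> \<open>g2 = 1\<close>])
  next
    case (3 e) show ?thesis by (rule q_2_oe[OF \<open>g1 = 1\<close> \<open>g2 = 2 + e\<close>])
  qed
next
  case (3 d)
  show ?thesis
  proof (cases g2 rule: gap_cases)
    case 1 show ?thesis by (rule q_2_dz[OF \<open>g1 = 2 + d\<close> \<open>g2 = 0\<close>])
  next
    case 2 show ?thesis by (rule q_2_do[OF \<open>g1 = 2 + d\<close> \<open>g2 = 1\<close>])
  next
    case (3 e) show ?thesis by (rule q_2_de[OF \<open>g1 = 2 + d\<close> \<open>g2 = 2 + e\<close>])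
  qed
qed

lemma q_3_zz: "g1 = 0 \<Longrightarrow> g2 = 0 \<Longrightarrow> Qc n (m+g1) (m+g1+g2) m"
  unfolding Qc_def by (simp add: chk_def fuel_def inr_def)

lemma q_3_zo: "g1 = 0 \<Longrightarrow> g2 = 1 \<Longrightarrow> Qc n (m+g1) (m+g1+g2) m"
  unfolding Qc_def by (simp add: chk_def fuel_def inr_def)

lemma q_3_ze: "g1 = 0 \<Longrightarrow> g2 = 2 + e \<Longrightarrow> Qc n (m+g1) (m+g1+g2) m"
  unfolding Qc_def by (simp add: chk_def fuel_def inr_def)

lemma q_3_oz: "g1 = 1 \<Longrightarrow> g2 = 0 \<Longrightarrow> Qc n (m+g1) (m+g1+g2) m"
  unfolding Qc_def by (simp add: chk_def fuel_def inr_def)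

lemma q_3_oo: "g1 = 1 \<Longrightarrow> g2 = 1 \<Longrightarrow> Qc n (m+g1) (m+g1+g2) m"
  unfolding Qc_def by (simp add: chk_def fuel_def inr_def)

lemma q_3_oe: "g1 = 1 \<Longrightarrow> g2 = 2 + e \<Longrightarrow> Qc n (m+g1) (m+g1+g2) m"
  unfolding Qc_def by (simp add: chk_def fuel_def inr_def)

lemma q_3_dz: "g1 = 2 + d \<Longrightarrow> g2 = 0 \<Longrightarrow> Qc n (m+g1) (m+g1+g2) m"
  unfolding Qc_def by (simp add: chk_def fuel_def inr_def)

lemma q_3_do: "g1 = 2 + d \<Longrightarrow> g2 = 1 \<Longrightarrow> Qc n (m+g1) (m+g1+g2) m"
  unfolding Qc_def by (simp add: chk_def fuel_def inr_def)

lemma q_3_de: "g1 = 2 + d \<Longrightarrow> g2 = 2 + e \<Longrightarrow> Qc n (m+g1) (m+g1+g2) m"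
  unfolding Qc_def by (simp add: chk_def fuel_def inr_def)

lemma qp_3: "Qc n (m+g1) (m+g1+g2) m"
proof (cases g1 rule: gap_cases)
  case 1
  show ?thesis
  proof (cases g2 rule: gap_cases)
    case 1 show ?thesis by (rule q_3_zz[OF \<open>g1 = 0\<close> \<open>g2 = 0\<close>])
  next
    case 2 show ?thesis by (rule q_3_zo[OF \<open>g1 = 0\<close> \<open>g2 = 1\<close>])
  next
    case (3 e) show ?thesis by (rule q_3_ze[OF \<open>g1 = 0\<close> \<open>g2 = 2 + e\<close>])
  qed
next
  case 2
  show ?thesis
  proof (cases g2 rule: gap_cases)
    case 1 show ?thesis by (rule q_3_oz[OF \<open>g1 = 1\<close> \<open>g2 = 0\<close>])
  next
    case 2 show ?thesis by (rule q_3_oo[OF \<open>g1 = 1\<close> \<open>g2 = 1\<close>])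
  next
    case (3 e) show ?thesis by (rule q_3_oe[OF \<open>g1 = 1\<close> \<open>g2 = 2 + e\<close>])
  qed
next
  case (3 d)
  show ?thesis
  proof (cases g2 rule: gap_cases)
    case 1 show ?thesis by (rule q_3_dz[OF \<open>g1 = 2 + d\<close> \<open>g2 = 0\<close>])
  next
    case 2 show ?thesis by (rule q_3_do[OF \<open>g1 = 2 + d\<close> \<open>g2 = 1\<close>])
  next
    case (3 e) show ?thesis by (rule q_3_de[OF \<open>g1 = 2 + d\<close> \<open>g2 = 2 + e\<close>])
  qed
qed

lemma q_4_zz: "g1 = 0 \<Longrightarrow> g2 = 0 \<Longrightarrow> Qc n (m+g1+g2) m (m+g1)"
  unfolding Qc_def by (simp add: chk_def fuel_def inr_def)

lemma q_4_zo: "g1 = 0 \<Longrightarrow> g2 = 1 \<Longrightarrow> Qc n (m+g1+g2) m (m+g1)"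
  unfolding Qc_def by (simp add: chk_def fuel_def inr_def)

lemma q_4_ze: "g1 = 0 \<Longrightarrow> g2 = 2 + e \<Longrightarrow> Qc n (m+g1+g2) m (m+g1)"
  unfolding Qc_def by (simp add: chk_def fuel_def inr_def)

lemma q_4_oz: "g1 = 1 \<Longrightarrow> g2 = 0 \<Longrightarrow> Qc n (m+g1+g2) m (m+g1)"
  unfolding Qc_def by (simp add: chk_def fuel_def inr_def)

lemma q_4_oo: "g1 = 1 \<Longrightarrow> g2 = 1 \<Longrightarrow> Qc n (m+g1+g2) m (m+g1)"
  unfolding Qc_def by (simp add: chk_def fuel_def inr_def)

lemma q_4_oe: "g1 = 1 \<Longrightarrow> g2 = 2 + e \<Longrightarrow> Qc n (m+g1+g2) m (m+g1)"
  unfolding Qc_def by (simp add: chk_def fuel_def inr_def)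

lemma q_4_dz: "g1 = 2 + d \<Longrightarrow> g2 = 0 \<Longrightarrow> Qc n (m+g1+g2) m (m+g1)"
  unfolding Qc_def by (simp add: chk_def fuel_def inr_def)

lemma q_4_do: "g1 = 2 + d \<Longrightarrow> g2 = 1 \<Longrightarrow> Qc n (m+g1+g2) m (m+g1)"
  unfolding Qc_def by (simp add: chk_def fuel_def inr_def)

lemma q_4_de: "g1 = 2 + d \<Longrightarrow> g2 = 2 + e \<Longrightarrow> Qc n (m+g1+g2) m (m+g1)"
  unfolding Qc_def by (simp add: chk_def fuel_def inr_def)

lemma qp_4: "Qc n (m+g1+g2) m (m+g1)"
proof (cases g1 rule: gap_cases)
  case 1
  show ?thesis
  proof (cases g2 rule: gap_cases)
    case 1 show ?thesis by (rule q_4_zz[OF \<open>g1 = 0\<close> \<open>g2 = 0\<close>])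
  next
    case 2 show ?thesis by (rule q_4_zo[OF \<open>g1 = 0\<close> \<open>g2 = 1\<close>])
  next
    case (3 e) show ?thesis by (rule q_4_ze[OF \<open>g1 = 0\<close> \<open>g2 = 2 + e\<close>])
  qed
next
  case 2
  show ?thesis
  proof (cases g2 rule: gap_cases)
    case 1 show ?thesis by (rule q_4_oz[OF \<open>g1 = 1\<close> \<open>g2 = 0\<close>])
  next
    case 2 show ?thesis by (rule q_4_oo[OF \<open>g1 = 1\<close> \<open>g2 = 1\<close>])
  next
    case (3 e) show ?thesis by (rule q_4_oe[OF \<open>g1 = 1\<close> \<open>g2 = 2 + e\<close>])
  qed
next
  case (3 d)
  show ?thesis
  proof (cases g2 rule: gap_cases)
    case 1 show ?thesis by (rule q_4_dz[OF \<open>g1 = 2 + d\<close> \<open>g2 = 0\<close>])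
  next
    case 2 show ?thesis by (rule q_4_do[OF \<open>g1 = 2 + d\<close> \<open>g2 = 1\<close>])
  next
    case (3 e) show ?thesis by (rule q_4_de[OF \<open>g1 = 2 + d\<close> \<open>g2 = 2 + e\<close>])
  qed
qed

lemma q_5_zz: "g1 = 0 \<Longrightarrow> g2 = 0 \<Longrightarrow> Qc n (m+g1+g2) (m+g1) m"
  unfolding Qc_def by (simp add: chk_def fuel_def inr_def)

lemma q_5_zo: "g1 = 0 \<Longrightarrow> g2 = 1 \<Longrightarrow> Qc n (m+g1+g2) (m+g1) m"
  unfolding Qc_def by (simp add: chk_def fuel_def inr_def)

lemma q_5_ze: "g1 = 0 \<Longrightarrow> g2 = 2 + e \<Longrightarrow> Qc n (m+g1+g2) (m+g1) m"
  unfolding Qc_def by (simp add: chk_def fuel_def inr_def)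

lemma q_5_oz: "g1 = 1 \<Longrightarrow> g2 = 0 \<Longrightarrow> Qc n (m+g1+g2) (m+g1) m"
  unfolding Qc_def by (simp add: chk_def fuel_def inr_def)

lemma q_5_oo: "g1 = 1 \<Longrightarrow> g2 = 1 \<Longrightarrow> Qc n (m+g1+g2) (m+g1) m"
  unfolding Qc_def by (simp add: chk_def fuel_def inr_def)

lemma q_5_oe: "g1 = 1 \<Longrightarrow> g2 = 2 + e \<Longrightarrow> Qc n (m+g1+g2) (m+g1) m"
  unfolding Qc_def by (simp add: chk_def fuel_def inr_def)

lemma q_5_dz: "g1 = 2 + d \<Longrightarrow> g2 = 0 \<Longrightarrow> Qc n (m+g1+g2) (m+g1) m"
  unfolding Qc_def by (simp add: chk_def fuel_def inr_def)

lemma q_5_do: "g1 = 2 + d \<Longrightarrow> g2 = 1 \<Longrightarrow> Qc n (m+g1+g2) (m+g1) m"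
  unfolding Qc_def by (simp add: chk_def fuel_def inr_def)

lemma q_5_de: "g1 = 2 + d \<Longrightarrow> g2 = 2 + e \<Longrightarrow> Qc n (m+g1+g2) (m+g1) m"
  unfolding Qc_def by (simp add: chk_def fuel_def inr_def)

lemma qp_5: "Qc n (m+g1+g2) (m+g1) m"
proof (cases g1 rule: gap_cases)
  case 1
  show ?thesis
  proof (cases g2 rule: gap_cases)
    case 1 show ?thesis by (rule q_5_zz[OF \<open>g1 = 0\<close> \<open>g2 = 0\<close>])
  next
    case 2 show ?thesis by (rule q_5_zo[OF \<open>g1 = 0\<close> \<open>g2 = 1\<close>])
  next
    case (3 e) show ?thesis by (rule q_5_ze[OF \<open>g1 = 0\<close> \<open>g2 = 2 + e\<close>])
  qed
next
  case 2
  show ?thesis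
  proof (cases g2 rule: gap_cases)
    case 1 show ?thesis by (rule q_5_oz[OF \<open>g1 = 1\<close> \<open>g2 = 0\<close>])
  next
    case 2 show ?thesis by (rule q_5_oo[OF \<open>g1 = 1\<close> \<open>g2 = 1\<close>])
  next
    case (3 e) show ?thesis by (rule q_5_oe[OF \<open>g1 = 1\<close> \<open>g2 = 2 + e\<close>])
  qed
next
  case (3 d)
  show ?thesis
  proof (cases g2 rule: gap_cases)
    case 1 show ?thesis by (rule q_5_dz[OF \<open>g1 = 2 + d\<close> \<open>g2 = 0\<close>])
  next
    case 2 show ?thesis by (rule q_5_do[OF \<open>g1 = 2 + d\<close> \<open>g2 = 1\<close>])
  next
    case (3 e) show ?thesis by (rule q_5_de[OF \<open>g1 = 2 + d\<close> \<open>g2 = 2 + e\<close>])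
  qed
qed


lemma Qc_all: "Qc n x y z"
proof -
  have "x \<le> y \<and> y \<le> z \<or> x \<le> z \<and> z \<le> y \<or> y \<le> x \<and> x \<le> z \<or> y \<le> z \<and> z \<le> x \<or> z \<le> x \<and> x \<le> y \<or> z \<le> y \<and> y \<le> x" by linarith
  then show ?thesis
  proof (elim disjE conjE)
    assume "x \<le> y" "y \<le> z" then show ?thesis using qp_0[of n x "y-x" "z-y"] by simp
  next
    assume "x \<le> z" "z \<le> y" then show ?thesis using qp_1[of n x "z-x" "y-z"] by simp
  next
    assume "y \<le> x" "x \<le> z" then show ?thesis using qp_2[of n y "x-y" "z-x"] by simp
  next
    assume "y \<le> z" "z \<le> x" then show ?thesis using qp_4[of n y "z-y" "x-z"] by simp
  next
    assume "z \<le> x" "x \<le> y" then show ?thesis using qp_3[of n z "x-z" "y-x"] by simp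
  next
    assume "z \<le> y" "y \<le> x" then show ?thesis using qp_5[of n z "y-z" "x-y"] by simp
  qed
qed


lemma cpl_none1: "\<not> inr n (idx a) \<Longrightarrow> cpl n a b = None"
  by (cases a; cases b) simp_all

lemma cpl_none2: "\<not> inr n (idx b) \<Longrightarrow> cpl n a b = None"
  by (cases a; cases b) simp_all

lemma chk_all: "chk n a b c"
proof (cases "inr n (idx a) \<and> inr n (idx b) \<and> inr n (idx c)")
  case True
  then show ?thesis using Qc_all[of n "idx a" "idx b" "idx c"]
    by (cases a; cases b; cases c) (simp_all add: Qc_def)
next
  case False
  then have "\<not> inr n (idx a) \<or> \<not> inr n (idx b) \<or> \<not> inr n (idx c)" by blast
  then show ?thesis
  proof (elim disjE)
    assume "\<not> inr n (idx a)"
    then have "cpl n a c = None" by (rule cpl_none1)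
    then show ?thesis unfolding chk_def by simp
  next
    assume "\<not> inr n (idx b)"
    then have "cpl n c b = None" by (rule cpl_none2)
    then show ?thesis unfolding chk_def by (simp split: option.splits)
  next
    assume "\<not> inr n (idx c)"
    then have "cpl n a c = None" by (rule cpl_none2)
    then show ?thesis unfolding chk_def by simp
  qed
qed




definition step :: "nat \<Rightarrow> letter list \<Rightarrow> letter list \<Rightarrow> bool" where
"step n u v \<longleftrightarrow> (\<exists>p s l r. sb_rel n l r \<and> ((u = p@l@s \<and> v = p@r@s) \<or> (u = p@r@s \<and> v = p@l@s)))"

lemma step_sym: "step n u v \<Longrightarrow> step n v u" unfolding step_def by blast

lemma rtr_sym: "(step n)\<^sup>*\<^sup>* u v \<Longrightarrow> (step n)\<^sup>*\<^sup>* v u"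
  by (induction rule: rtranclp_induct) (auto intro: converse_rtranclp_into_rtranclp step_sym)

lemma step_eq1: "step n u v \<Longrightarrow> sb_eq n u v"
  unfolding step_def by (auto intro: sb_eq.rel sb_eq.sym[OF sb_eq.rel])

lemma sb_eq_step: "sb_eq n u v \<Longrightarrow> (step n)\<^sup>*\<^sup>* u v"
proof (induction rule: sb_eq.induct)
  case (refl w) then show ?case by simp
next
  case (sym u v) then show ?case using rtr_sym by blast
next
  case (trans u v w) then show ?case by simp
next
  case (rel u v a b) then show ?case unfolding step_def by (intro r_into_rtranclp) blast
qed

lemma step_sb_eq: "(step n)\<^sup>*\<^sup>* u v \<Longrightarrow> sb_eq n u v"
proof (induction rule: rtranclp_induct)
  case base then show ?case by (rule sb_eq.refl)
next
  case (step y z)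
  then have "sb_eq n y z" using step_eq1 by blast
  then show ?case using step sb_eq.trans by blast
qed

lemma sb_eq_iff: "sb_eq n u v \<longleftrightarrow> (step n)\<^sup>*\<^sup>* u v"
  using sb_eq_step step_sb_eq by blast

lemma sb_rel_len: "sb_rel n l r \<Longrightarrow> length l = length r"
  by (induction rule: sb_rel.induct) auto

lemma sb_eq_len: "sb_eq n u v \<Longrightarrow> length u = length v"
  by (induction rule: sb_eq.induct) (auto dest: sb_rel_len)

lemma sb_eq_ctx: "sb_eq n u v \<Longrightarrow> sb_eq n (p@u@s) (p@v@s)"
proof (induction rule: sb_eq.induct)
  case (refl w) show ?case by (rule sb_eq.refl)
next
  case (sym u v) show ?case by (rule sb_eq.sym[OF sym.IH])
next
  case (trans u v w) then show ?case using sb_eq.trans by blast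
next
  case (rel u v a b)
  have "sb_eq n ((p@a)@u@(b@s)) ((p@a)@v@(b@s))" using rel by (rule sb_eq.rel)
  then show ?case by simp
qed

lemma sb_eq_app: "sb_eq n u u' \<Longrightarrow> sb_eq n v v' \<Longrightarrow> sb_eq n (u@v) (u'@v')"
proof -
  assume a: "sb_eq n u u'" and b: "sb_eq n v v'"
  have "sb_eq n ([]@u@v) ([]@u'@v)" using sb_eq_ctx[OF a] .
  moreover have "sb_eq n (u'@v@[]) (u'@v'@[])" using sb_eq_ctx[OF b] .
  ultimately show ?thesis using sb_eq.trans by simp
qed

lemma sb_eq_cons: "sb_eq n u u' \<Longrightarrow> sb_eq n (a#u) (a#u')"
  using sb_eq_app[OF sb_eq.refl[of n "[a]"]] by simp

lemma braid': "1 \<le> i \<Longrightarrow> Suc i \<le> n - 1 \<Longrightarrow> sb_rel n [Sig i, Sig (Suc i), Sig i] [Sig (Suc i), Sig i, Sig (Suc i)]"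
  using sb_rel.braid[of i n] by simp
lemma mixed1': "1 \<le> i \<Longrightarrow> Suc i \<le> n - 1 \<Longrightarrow> sb_rel n [Sig i, Sig (Suc i), Xl i] [Xl (Suc i), Sig i, Sig (Suc i)]"
  using sb_rel.mixed1[of i n] by simp
lemma mixed2': "1 \<le> i \<Longrightarrow> Suc i \<le> n - 1 \<Longrightarrow> sb_rel n [Sig (Suc i), Sig i, Xl (Suc i)] [Xl i, Sig (Suc i), Sig i]"
  using sb_rel.mixed2[of i n] by simp
lemmas rels = sb_rel.comm_ss sb_rel.comm_xx sb_rel.comm_xs braid' mixed1' mixed2'
lemma cpl_iff: "cpl n a b = Some (u,v) \<longleftrightarrow> (sb_rel n (a#u) (b#v) \<or> sb_rel n (b#v) (a#u))"
proof
  assume "cpl n a b = Some (u,v)"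
  then show "sb_rel n (a#u) (b#v) \<or> sb_rel n (b#v) (a#u)"
    by (cases a; cases b) (auto simp: inr_def split: if_splits intro: rels)
next
  assume "sb_rel n (a#u) (b#v) \<or> sb_rel n (b#v) (a#u)"
  then show "cpl n a b = Some (u,v)"
    by (auto simp: inr_def elim!: sb_rel.cases)
qed

lemma cpl_sym: "cpl n a b = Some (u,v) \<Longrightarrow> cpl n b a = Some (v,u)"
  by (auto simp: cpl_iff)

lemma cpl_ne: "cpl n a b = Some (u,v) \<Longrightarrow> a \<noteq> b"
  by (cases a; cases b) (auto simp: inr_def split: if_splits)

lemma cpl_eq: "cpl n a b = Some (u,v) \<Longrightarrow> sb_eq n (a#u) (b#v)"
  unfolding cpl_iff
  using sb_eq.rel[of n _ _ "[]" "[]"] sb_eq.sym by fastforce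

lemma sb_rel_hd: "sb_rel n l r \<Longrightarrow> \<exists>a b u v. l = a#u \<and> r = b#v \<and> cpl n a b = Some (u,v)"
  by (cases l; cases r) (auto simp: cpl_iff elim: sb_rel.cases)

lemma step_same: "step n (c#V) (c#Y) \<Longrightarrow> step n V Y"
proof -
  assume "step n (c#V) (c#Y)"
  then obtain p s l r where R: "sb_rel n l r" and E: "(c#V = p@l@s \<and> c#Y = p@r@s) \<or> (c#V = p@r@s \<and> c#Y = p@l@s)"
    unfolding step_def by blast
  obtain a b u v where l: "l = a#u" "r = b#v" "cpl n a b = Some (u,v)" using sb_rel_hd[OF R] by blast
  have "a \<noteq> b" using l(3) by (rule cpl_ne)
  show "step n V Y"
  proof (cases p)
    case Nil then show ?thesis using E l \<open>a\<noteq>b\<close> by auto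
  next
    case (Cons x p') then show ?thesis using E R unfolding step_def by auto
  qed
qed

lemma step_diff: "step n (c#V) (b#Y) \<Longrightarrow> c \<noteq> b \<Longrightarrow> \<exists>l r s. cpl n c b = Some (l,r) \<and> V = l@s \<and> Y = r@s"
proof -
  assume "step n (c#V) (b#Y)" "c \<noteq> b"
  then obtain p s l r where R: "sb_rel n l r" and E: "(c#V = p@l@s \<and> b#Y = p@r@s) \<or> (c#V = p@r@s \<and> b#Y = p@l@s)"
    unfolding step_def by blast
  obtain a b' u v where l: "l = a#u" "r = b'#v" "cpl n a b' = Some (u,v)" using sb_rel_hd[OF R] by blast
  have "p = []" using E \<open>c\<noteq>b\<close> by (cases p) auto
  have l2: "cpl n b' a = Some (v,u)" using cpl_sym[OF l(3)] .
  show ?thesis using E l l2 \<open>p = []\<close> by auto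
qed

definition Cp :: "nat \<Rightarrow> letter \<Rightarrow> letter \<Rightarrow> letter list \<Rightarrow> letter list \<Rightarrow> bool" where
"Cp n a b X Y \<longleftrightarrow> (if a = b then sb_eq n X Y else
   (\<exists>u v Z. cpl n a b = Some (u,v) \<and> sb_eq n X (u@Z) \<and> sb_eq n Y (v@Z)))"

definition IH :: "nat \<Rightarrow> nat \<Rightarrow> bool" where
"IH n N \<longleftrightarrow> (\<forall>a b X Y. length X < N \<longrightarrow> sb_eq n (a#X) (b#Y) \<longrightarrow> Cp n a b X Y)"

lemma rv_sound:
  "IH n N \<Longrightarrow> length (u@Z) \<le> N \<Longrightarrow> sb_eq n (u@Z) (v@T) \<Longrightarrow>
   (rv n f u v = Res v' u' \<longrightarrow> (\<exists>W. sb_eq n Z (v'@W) \<and> sb_eq n T (u'@W))) \<and> rv n f u v \<noteq> Fail"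
proof (induction n f u v arbitrary: Z T v' u' rule: rv.induct)
  case (1 n u v) then show ?case by simp
next
  case (2 n f v) then show ?case using sb_eq.refl[of n T] "2.prems"(3) by auto
next
  case (3 n f a u) then show ?case using sb_eq.refl[of n Z] sb_eq.sym[OF "3.prems"(3)] by (auto intro!: exI[of _ Z])
next
  case (4 n f a u b v)
  have ihN: "\<And>a b X Y. length X < N \<Longrightarrow> sb_eq n (a#X) (b#Y) \<Longrightarrow> Cp n a b X Y"
    using "4.prems"(1) unfolding IH_def by blast
  have len0: "length (u@Z) < N" using "4.prems"(2) by simp
  have len1: "length (u@Z) \<le> N" using "4.prems"(2) by simp
  have lenv: "length (v@T) = length (u@Z)" using sb_eq_len[OF "4.prems"(3)] by simp
  have CC: "Cp n a b (u@Z) (v@T)" using ihN[OF len0] "4.prems"(3) by simp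
  show ?case
  proof (cases "a = b")
    case True
    then have ee: "sb_eq n (u@Z) (v@T)" using CC by (simp add: Cp_def)
    have "(rv n f u v = Res v' u' \<longrightarrow> (\<exists>W. sb_eq n Z (v'@W) \<and> sb_eq n T (u'@W))) \<and> rv n f u v \<noteq> Fail"
      by (rule "4.IH"(1)[OF True "4.prems"(1) len1 ee])
    then show ?thesis using True by simp
  next
    case False
    then obtain x y W0 where c: "cpl n a b = Some (x,y)" and e1: "sb_eq n (u@Z) (x@W0)" and e2: "sb_eq n (v@T) (y@W0)"
      using CC unfolding Cp_def by auto
    have A: "(rv n f u x = Res p q \<longrightarrow> (\<exists>W. sb_eq n Z (p@W) \<and> sb_eq n W0 (q@W))) \<and> rv n f u x \<noteq> Fail" for p q
      by (rule "4.IH"(2)[OF False c HOL.refl "4.prems"(1) len1 e1])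
    show ?thesis
    proof (cases "rv n f u x")
      case (Res p q)
      then obtain W1 where w1: "sb_eq n Z (p@W1)" "sb_eq n W0 (q@W1)" using A by blast
      have e3: "sb_eq n (v@T) ((y@q)@W1)" using sb_eq.trans[OF e2 sb_eq_app[OF sb_eq.refl[of n y] w1(2)]] by simp
      have len2: "length (v@T) \<le> N" using lenv len1 by simp
      have B: "(rv n f v (y@q) = Res r s \<longrightarrow> (\<exists>W. sb_eq n T (r@W) \<and> sb_eq n W1 (s@W))) \<and> rv n f v (y@q) \<noteq> Fail" for r s
        by (rule "4.IH"(3)[OF False c HOL.refl Res "4.prems"(1) len2 e3])
      show ?thesis
      proof (cases "rv n f v (y@q)")
        case (Res r s)
        then obtain W2 where w2: "sb_eq n T (r@W2)" "sb_eq n W1 (s@W2)" using B by blast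
        have "sb_eq n Z (p@s@W2)" using sb_eq.trans[OF w1(1) sb_eq_app[OF sb_eq.refl[of n p] w2(2)]] .
        then show ?thesis using False c \<open>rv n f u x = Res p q\<close> Res w2 by auto
      next
        case Fail then show ?thesis using B by blast
      next
        case OOF then show ?thesis using False c \<open>rv n f u x = Res p q\<close> by simp
      qed
    next
      case Fail then show ?thesis using A by blast
    next
      case OOF then show ?thesis using False c by simp
    qed
  qed
qed

lemma rv_syn: "rv n f u v = Res v' u' \<Longrightarrow> sb_eq n (u@v') (v@u')"
proof (induction n f u v arbitrary: v' u' rule: rv.induct)
  case (1 n u v) then show ?case by simp
next
  case (2 n f v) then show ?case by (auto intro: sb_eq.refl)
next
  case (3 n f a u) then show ?case by (auto intro: sb_eq.refl)
next
  case (4 n f a u b v)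
  show ?case
  proof (cases "a = b")
    case True then show ?thesis using 4 by (auto intro: sb_eq_cons)
  next
    case False
    then obtain x y p q r s where c: "cpl n a b = Some (x,y)" and r1: "rv n f u x = Res p q"
      and r2: "rv n f v (y@q) = Res r s" and res: "v' = p@s" "u' = r" using "4.prems"
      by (auto split: option.splits rres.splits)
    have h1: "sb_eq n (u@p) (x@q)" using "4.IH"(2)[OF False c HOL.refl r1] .
    have h2: "sb_eq n (v@r) (y@q@s)" using "4.IH"(3)[OF False c HOL.refl r1 r2] by simp
    have "sb_eq n (a#u@p@s) (a#x@q@s)" using sb_eq_app[OF h1 sb_eq.refl[of n s]] sb_eq_cons by force
    moreover have "sb_eq n (a#x@q@s) (b#y@q@s)" using sb_eq_app[OF cpl_eq[OF c] sb_eq.refl[of n "q@s"]] by simp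
    moreover have "sb_eq n (b#y@q@s) (b#v@r)" using sb_eq_cons[OF h2] sb_eq.sym by blast
    ultimately show ?thesis using res by (auto intro: sb_eq.trans)
  qed
qed

lemma prefix_cancel: "IH n N \<Longrightarrow> length (p@Z) \<le> N \<Longrightarrow> sb_eq n (p@Z) (p@T) \<Longrightarrow> sb_eq n Z T"
proof (induction p)
  case Nil then show ?case by simp
next
  case (Cons a p)
  have "Cp n a a (p@Z) (p@T)" using Cons.prems unfolding IH_def by auto
  then have "sb_eq n (p@Z) (p@T)" by (simp add: Cp_def)
  then show ?case using Cons by auto
qed

lemma cube:
  assumes ih: "IH n N" and ne: "a \<noteq> b" "a \<noteq> c" "b \<noteq> c"
    and c1: "cpl n a c = Some (u1,v1)" and c2: "cpl n c b = Some (u2,v2)"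
    and len: "length (v1@Z1) \<le> N" and e: "sb_eq n (v1@Z1) (u2@T)"
  shows "\<exists>u v Z. cpl n a b = Some (u,v) \<and> sb_eq n (u1@Z1) (u@Z) \<and> sb_eq n (v2@T) (v@Z)"
proof -
  have ch: "chk n a b c" by (rule chk_all)
  have S: "(rv n fuel v1 u2 = Res p q \<longrightarrow> (\<exists>W. sb_eq n Z1 (p@W) \<and> sb_eq n T (q@W))) \<and> rv n fuel v1 u2 \<noteq> Fail" for p q
    using rv_sound[OF ih len e] by blast
  show ?thesis
  proof (cases "rv n fuel v1 u2")
    case (Res p q)
    then obtain W where w: "sb_eq n Z1 (p@W)" "sb_eq n T (q@W)" using S by blast
    have ch2: "case cpl n a b of None \<Rightarrow> False | Some(u,v) \<Rightarrow>
          (case rv n fuel u (u1@p) of Res w e \<Rightarrow> e = [] \<and> rv n fuel (v@w) (v2@q) = Res [] [] | _ \<Rightarrow> False)"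
      using ch ne c1 c2 Res unfolding chk_def by simp
    then obtain u v where c3: "cpl n a b = Some (u,v)" and
      ch3: "case rv n fuel u (u1@p) of Res w e \<Rightarrow> e = [] \<and> rv n fuel (v@w) (v2@q) = Res [] [] | _ \<Rightarrow> False"
      by (auto split: option.splits)
    then obtain w' where r3: "rv n fuel u (u1@p) = Res w' []" and r4: "rv n fuel (v@w') (v2@q) = Res [] []"
      by (auto split: rres.splits)
    have h3: "sb_eq n (u@w') (u1@p)" using rv_syn[OF r3] by simp
    have h4: "sb_eq n (v@w') (v2@q)" using rv_syn[OF r4] by simp
    have "sb_eq n (u1@Z1) (u1@p@W)" using sb_eq_app[OF sb_eq.refl w(1)] .
    moreover have "sb_eq n (u1@p@W) (u@w'@W)" using sb_eq_app[OF h3 sb_eq.refl[of n W]] sb_eq.sym by force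
    moreover have "sb_eq n (v2@T) (v2@q@W)" using sb_eq_app[OF sb_eq.refl w(2)] .
    moreover have "sb_eq n (v2@q@W) (v@w'@W)" using sb_eq_app[OF h4 sb_eq.refl[of n W]] sb_eq.sym by force
    ultimately show ?thesis using c3 by (blast intro: sb_eq.trans)
  next
    case Fail then show ?thesis using S by blast
  next
    case OOF then show ?thesis using ch ne c1 c2 unfolding chk_def by auto
  qed
qed

lemma Cp_trans: "Cp n a b X V \<Longrightarrow> sb_eq n V Y \<Longrightarrow> Cp n a b X Y"
proof -
  assume c: "Cp n a b X V" and e: "sb_eq n V Y"
  show ?thesis
  proof (cases "a = b")
    case True then show ?thesis using c e sb_eq.trans by (simp add: Cp_def)
  next
    case False
    then obtain u v Z where "cpl n a b = Some (u,v)" "sb_eq n X (u@Z)" "sb_eq n V (v@Z)" using c by (auto simp: Cp_def)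
    then show ?thesis using False sb_eq.trans[OF sb_eq.sym[OF e]] by (auto simp: Cp_def)
  qed
qed

lemma IH_all: "IH n N"
proof (induction N)
  case 0 then show ?case by (simp add: IH_def)
next
  case (Suc N)
  have key: "(step n)\<^sup>*\<^sup>* (a#X) w \<Longrightarrow> length X = N \<Longrightarrow> w = b#Y \<Longrightarrow> Cp n a b X Y" for a b X Y w
  proof (induction w arbitrary: b Y rule: rtranclp_induct)
    case base then show ?case by (simp add: Cp_def sb_eq.refl)
  next
    case (step w0 w)
    have "length w0 = length (a#X)" using sb_eq_len[OF step_sb_eq[OF step(1)]] ..
    then obtain c V where w0: "w0 = c#V" by (cases w0) auto
    have lV: "length V = N" using \<open>length w0 = _\<close> w0 step(4) by simp
    have CV: "Cp n a c X V" by (rule step.IH[OF step.prems(1) w0])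
    have st: "step n (c#V) (b#Y)" using step.hyps(2) w0 step.prems(2) by simp
    show ?case
    proof (cases "c = b")
      case True
      then have "step n V Y" using step_same st by simp
      then have "sb_eq n V Y" by (rule step_eq1)
      then show ?thesis using CV True Cp_trans by blast
    next
      case False
      then obtain l r s where cb: "cpl n c b = Some (l,r)" and V: "V = l@s" and Y: "Y = r@s"
        using step_diff[OF st] by blast
      show ?thesis
      proof (cases "a = c")
        case True
        then have xv: "sb_eq n X V" using CV by (simp add: Cp_def)
        have "cpl n a b = Some (l,r) \<and> sb_eq n X (l@s) \<and> sb_eq n Y (r@s)"
          using True cb xv V Y sb_eq.refl[of n Y] by simp
        then show ?thesis using True False unfolding Cp_def by auto
      next
        case ac: False
        then obtain u1 v1 Z1 where c1: "cpl n a c = Some (u1,v1)" and x: "sb_eq n X (u1@Z1)" and v: "sb_eq n V (v1@Z1)"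
          using CV by (auto simp: Cp_def)
        have e: "sb_eq n (v1@Z1) (l@s)" using sb_eq.sym[OF v] V by simp
        have len: "length (v1@Z1) \<le> N" using sb_eq_len[OF v] lV by simp
        show ?thesis
        proof (cases "a = b")
          case True
          have "cpl n c a = Some (v1,u1)" using cpl_sym[OF c1] .
          then have "l = v1" "r = u1" using cb True by auto
          then have "sb_eq n Z1 s" using prefix_cancel[OF Suc.IH len] e by simp
          then have "sb_eq n X Y" using sb_eq.trans[OF x sb_eq_app[OF sb_eq.refl[of n u1] \<open>sb_eq n Z1 s\<close>]] Y \<open>r = u1\<close> by simp
          then show ?thesis using True by (simp add: Cp_def)
        next
          case ab: False
          obtain u v Z where "cpl n a b = Some (u,v)" "sb_eq n (u1@Z1) (u@Z)" "sb_eq n (r@s) (v@Z)"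
            using cube[OF Suc.IH ab ac not_sym[OF False] c1 cb len e] by blast
          then have "cpl n a b = Some (u,v) \<and> sb_eq n X (u@Z) \<and> sb_eq n Y (v@Z)" using sb_eq.trans[OF x] Y by simp
          then show ?thesis using ab unfolding Cp_def by auto
        qed
      qed
    qed
  qed
  show ?case unfolding IH_def
  proof (intro allI impI)
    fix a b X Y assume l: "length X < Suc N" and e: "sb_eq n (a#X) (b#Y)"
    show "Cp n a b X Y"
    proof (cases "length X < N")
      case True then show ?thesis using Suc.IH e unfolding IH_def by blast
    next
      case False then show ?thesis using key[OF sb_eq_step[OF e]] l by simp
    qed
  qed
qed

lemma left_cancel: "sb_eq n (p@X) (p@Y) \<Longrightarrow> sb_eq n X Y"
  by (rule prefix_cancel[OF IH_all order.refl])

lemma sb_rel_rev: "sb_rel n u v \<Longrightarrow> sb_rel n (rev u) (rev v) \<or> sb_rel n (rev v) (rev u)"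
  by (induction rule: sb_rel.induct) (auto intro: rels)

lemma sb_eq_rev: "sb_eq n u v \<Longrightarrow> sb_eq n (rev u) (rev v)"
proof (induction rule: sb_eq.induct)
  case (refl w) show ?case by (rule sb_eq.refl)
next
  case (sym u v) show ?case by (rule sb_eq.sym[OF sym.IH])
next
  case (trans u v w) then show ?case using sb_eq.trans by blast
next
  case (rel u v a b)
  from sb_rel_rev[OF rel] show ?case
  proof
    assume "sb_rel n (rev u) (rev v)"
    then show ?case using sb_eq.rel[of n "rev u" "rev v" "rev b" "rev a"] by simp
  next
    assume "sb_rel n (rev v) (rev u)"
    then show ?case using sb_eq.sym[OF sb_eq.rel[of n "rev v" "rev u" "rev b" "rev a"]] by simp
  qed
qed

lemma right_cancel: "sb_eq n (X@s) (Y@s) \<Longrightarrow> sb_eq n X Y"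
proof -
  assume "sb_eq n (X@s) (Y@s)"
  then have "sb_eq n (rev (X@s)) (rev (Y@s))" by (rule sb_eq_rev)
  then have "sb_eq n (rev s @ rev X) (rev s @ rev Y)" by simp
  then have "sb_eq n (rev X) (rev Y)" by (rule left_cancel)
  then have "sb_eq n (rev (rev X)) (rev (rev Y))" by (rule sb_eq_rev)
  then show ?thesis by simp
qed

theorem corollary2p1:
  fixes n :: nat and A B P Q X Y :: "letter list"
  assumes "n \<ge> 2"
    and "pos_word n A" "pos_word n B" "pos_word n P" "pos_word n Q"
    and "pos_word n X" "pos_word n Y"
    and "sb_eq n A P" "sb_eq n B Q"
    and "sb_eq n (A @ X @ B) (P @ Y @ Q)"
  shows "sb_eq n X Y"
proof -
  have "sb_eq n (P @ Y @ Q) (A @ Y @ B)"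
    using sb_eq_app[OF sb_eq.sym[OF assms(8)] sb_eq_app[OF sb_eq.refl sb_eq.sym[OF assms(9)]]] by simp
  then have "sb_eq n (A @ X @ B) (A @ Y @ B)" using assms(10) by (rule sb_eq.trans[rotated])
  then have "sb_eq n (X @ B) (Y @ B)" by (rule left_cancel)
  then show ?thesis by (rule right_cancel)
qed


end
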